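(* Let $L$ be a bounded distributive lattice and $f\colon L^n\to L$ an aggregation function. If $f$ is inf-homogeneous and comonotone supremal, or $f$ is sup-homogeneous and comonotone infimal, then $f$ is a Sugeno integral, i.e. $f=\mathsf{Su}_m$ for some $L$-valued capacity $m$ on $[n]$.
   Context: $[n]=\{1,\dots,n\}$. An aggregation function is a monotone $f\colon L^n\to L$ with $f(0,\dots,0)=0$, $f(1,\dots,1)=1$. An $L$-valued capacity is $m\colon2^{[n]}\to L$, monotone, $m(\emptyset)=0$, $m([n])=1$; $\mathsf{Su}_m(\mathbf x)=\bigvee_{I\subseteq[n]}\big(m(I)\wedge\bigwedge_{i\in I}x_i\big)$ (empty meet $=1$). For $c\in L$, $\mathbf c=(c,\dots,c)$; $f$ is inf-homogeneous if $f(\mathbf c\wedge\mathbf x)=c\wedge f(\mathbf x)$, sup-homogeneous if $f(\mathbf c\vee\mathbf x)=c\vee f(\mathbf x)$, for all $\mathbf x\in L^n,c\in L$. $\mathbf x,\mathbf y$ are comonotone if for all $i,j$: ($x_i\le x_j$ and $y_i\le y_j$) or ($x_i\ge x_j$ and $y_i\ge y_j$). $f$ is comonotone supremal (resp. infimal) if $f(\mathbf x\vee\mathbf y)=f(\mathbf x)\vee f(\mathbf y)$ (resp. $f(\mathbf x\wedge\mathbf y)=f(\mathbf x)\wedge f(\mathbf y)$) for all comonotone $\mathbf x,\mathbf y$. *)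

theory Defs
  imports Main
begin

text \<open>L is a bounded distributive lattice; [n] is modelled as a finite index type 'n,
  so L^n is the function type 'n \<Rightarrow> L with the pointwise order.\<close>

definition fin_Inf :: "'a::bounded_lattice set \<Rightarrow> 'a" where
  "fin_Inf A = Finite_Set.fold inf top A"

definition fin_Sup :: "'a::bounded_lattice set \<Rightarrow> 'a" where
  "fin_Sup A = Finite_Set.fold sup bot A"

definition aggregation :: "(('n::finite \<Rightarrow> 'a::{distrib_lattice,bounded_lattice}) \<Rightarrow> 'a) \<Rightarrow> bool" where
  "aggregation f \<longleftrightarrow> mono f \<and> f (\<lambda>_. bot) = bot \<and> f (\<lambda>_. top) = top"

definition capacity :: "('n::finite set \<Rightarrow> 'a::{distrib_lattice,bounded_lattice}) \<Rightarrow> bool" where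
  "capacity m \<longleftrightarrow> mono m \<and> m {} = bot \<and> m UNIV = top"

definition sugeno :: "('n::finite set \<Rightarrow> 'a::{distrib_lattice,bounded_lattice}) \<Rightarrow> ('n \<Rightarrow> 'a) \<Rightarrow> 'a" where
  "sugeno m x = fin_Sup ((\<lambda>I. inf (m I) (fin_Inf (x ` I))) ` (UNIV :: 'n set set))"

definition inf_homogeneous :: "(('n \<Rightarrow> 'a::{distrib_lattice,bounded_lattice}) \<Rightarrow> 'a) \<Rightarrow> bool" where
  "inf_homogeneous f \<longleftrightarrow> (\<forall>x c. f (\<lambda>i. inf c (x i)) = inf c (f x))"

definition sup_homogeneous :: "(('n \<Rightarrow> 'a::{distrib_lattice,bounded_lattice}) \<Rightarrow> 'a) \<Rightarrow> bool" where
  "sup_homogeneous f \<longleftrightarrow> (\<forall>x c. f (\<lambda>i. sup c (x i)) = sup c (f x))"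

definition comonotone :: "('n \<Rightarrow> 'a::order) \<Rightarrow> ('n \<Rightarrow> 'a) \<Rightarrow> bool" where
  "comonotone x y \<longleftrightarrow> (\<forall>i j. (x i \<le> x j \<and> y i \<le> y j) \<or> (x j \<le> x i \<and> y j \<le> y i))"

definition comonotone_supremal :: "(('n \<Rightarrow> 'a::{distrib_lattice,bounded_lattice}) \<Rightarrow> 'a) \<Rightarrow> bool" where
  "comonotone_supremal f \<longleftrightarrow> (\<forall>x y. comonotone x y \<longrightarrow> f (\<lambda>i. sup (x i) (y i)) = sup (f x) (f y))"

definition comonotone_infimal :: "(('n \<Rightarrow> 'a::{distrib_lattice,bounded_lattice}) \<Rightarrow> 'a) \<Rightarrow> bool" where
  "comonotone_infimal f \<longleftrightarrow> (\<forall>x y. comonotone x y \<longrightarrow> f (\<lambda>i. inf (x i) (y i)) = inf (f x) (f y))"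

end

theory Submission imports Defs begin

lemma fin_Inf_empty[simp]: "fin_Inf {} = top" by (simp add: fin_Inf_def)
lemma fin_Sup_empty[simp]: "fin_Sup {} = bot" by (simp add: fin_Sup_def)
lemma fin_Inf_insert[simp]: fixes a :: "'a::bounded_lattice" shows "finite A \<Longrightarrow> fin_Inf (insert a A) = inf a (fin_Inf A)"
proof -
  interpret comp_fun_idem "inf :: 'a \<Rightarrow> 'a \<Rightarrow> 'a" by (fact comp_fun_idem_inf)
  assume "finite A" then show ?thesis unfolding fin_Inf_def by simp
qed
lemma fin_Sup_insert[simp]: fixes a :: "'a::bounded_lattice" shows "finite A \<Longrightarrow> fin_Sup (insert a A) = sup a (fin_Sup A)"
proof -
  interpret comp_fun_idem "sup :: 'a \<Rightarrow> 'a \<Rightarrow> 'a" by (fact comp_fun_idem_sup)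
  assume "finite A" then show ?thesis unfolding fin_Sup_def by simp
qed

lemma le_fin_Inf_iff: "finite A \<Longrightarrow> (b \<le> fin_Inf A) = (\<forall>a\<in>A. b \<le> a)"
  by (induct A rule: finite_induct) auto
lemma fin_Sup_le_iff: "finite A \<Longrightarrow> (fin_Sup A \<le> b) = (\<forall>a\<in>A. a \<le> b)"
  by (induct A rule: finite_induct) auto
lemma fin_Inf_le: "finite A \<Longrightarrow> a \<in> A \<Longrightarrow> fin_Inf A \<le> a"
  using le_fin_Inf_iff by blast
lemma le_fin_Sup: "finite A \<Longrightarrow> a \<in> A \<Longrightarrow> a \<le> fin_Sup A"
  using fin_Sup_le_iff by blast


definition chi :: "'n set \<Rightarrow> 'n \<Rightarrow> 'a::bounded_lattice" where
  "chi A = (\<lambda>i. if i \<in> A then top else bot)"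

lemma inf_fin_Sup: "finite B \<Longrightarrow> inf (a::'a::{distrib_lattice,bounded_lattice}) (fin_Sup (g ` B)) = fin_Sup ((\<lambda>j. inf a (g j)) ` B)"
  by (induct B rule: finite_induct) (auto simp: inf_sup_distrib1)

lemma sugeno_term: "inf (m I) (fin_Inf (x ` I)) \<le> sugeno m (x::'n::finite \<Rightarrow> 'a::{distrib_lattice,bounded_lattice})"
  unfolding sugeno_def by (rule le_fin_Sup) auto

lemma sugeno_le: "(\<And>I. inf (m I) (fin_Inf (x ` I)) \<le> b) \<Longrightarrow> sugeno m (x::'n::finite \<Rightarrow> 'a::{distrib_lattice,bounded_lattice}) \<le> b"
  unfolding sugeno_def by (subst fin_Sup_le_iff) auto

lemma sugeno_mono: assumes "x \<le> y" shows "sugeno m (x::'n::finite \<Rightarrow> 'a::{distrib_lattice,bounded_lattice}) \<le> sugeno m y"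
proof (rule sugeno_le)
  fix I
  have "fin_Inf (x ` I) \<le> fin_Inf (y ` I)"
    by (subst le_fin_Inf_iff) (auto intro: order_trans[OF fin_Inf_le] assms[unfolded le_fun_def, rule_format])
  then have "inf (m I) (fin_Inf (x ` I)) \<le> inf (m I) (fin_Inf (y ` I))" by (rule inf_mono[OF order_refl])
  also have "\<dots> \<le> sugeno m y" by (rule sugeno_term)
  finally show "inf (m I) (fin_Inf (x ` I)) \<le> sugeno m y" .
qed


context
  fixes f :: "('n::finite \<Rightarrow> 'a::{distrib_lattice,bounded_lattice}) \<Rightarrow> 'a"
  assumes agg: "aggregation f"
    and H: "(inf_homogeneous f \<and> comonotone_supremal f) \<or> (sup_homogeneous f \<and> comonotone_infimal f)"
begin

lemma fmono: "x \<le> y \<Longrightarrow> f x \<le> f y"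
  using agg unfolding aggregation_def mono_def by blast

lemma C1: "f (\<lambda>_. e) = e"
  using H
proof
  assume "inf_homogeneous f \<and> comonotone_supremal f"
  then have "\<forall>x c. f (\<lambda>i. inf c (x i)) = inf c (f x)" unfolding inf_homogeneous_def by blast
  from this[rule_format, of e "\<lambda>_. top"] have "f (\<lambda>i. inf e top) = inf e (f (\<lambda>_. top))" .
  then show ?thesis using agg unfolding aggregation_def by simp
next
  assume "sup_homogeneous f \<and> comonotone_infimal f"
  then have "\<forall>x c. f (\<lambda>i. sup c (x i)) = sup c (f x)" unfolding sup_homogeneous_def by blast
  from this[rule_format, of e "\<lambda>_. bot"] have "f (\<lambda>i. sup e bot) = sup e (f (\<lambda>_. bot))" .
  then show ?thesis using agg unfolding aggregation_def by simp
qed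

lemma como_chi: "comonotone (\<lambda>_. e) (\<lambda>i. inf d (chi A i))"
  unfolding comonotone_def chi_def by auto

lemma como_chi2: "comonotone (\<lambda>i. inf d (chi A i)) (\<lambda>_. e)"
  unfolding comonotone_def chi_def by auto

lemma C2: "f (\<lambda>i. inf d (chi A i)) = inf d (f (chi A))"
  using H
proof
  assume "inf_homogeneous f \<and> comonotone_supremal f"
  then show ?thesis unfolding inf_homogeneous_def by blast
next
  assume "sup_homogeneous f \<and> comonotone_infimal f"
  then have "\<forall>x y. comonotone x y \<longrightarrow> f (\<lambda>i. inf (x i) (y i)) = inf (f x) (f y)"
    unfolding comonotone_infimal_def by blast
  note hh = this
  have "f (\<lambda>i. inf d (inf top (chi A i))) = inf (f (\<lambda>_. d)) (f (\<lambda>i. inf top (chi A i)))"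
    using como_chi[of d top A] by (rule hh[rule_format, of "\<lambda>_. d" "\<lambda>i. inf top (chi A i)"])
  then show ?thesis using C1 by simp
qed

lemma C3: assumes "e \<le> d" shows "f (\<lambda>i. if i \<in> A then d else e) \<le> sup (inf d (f (chi A))) e"
proof -
  have w: "(\<lambda>i. if i \<in> A then d else e) = (\<lambda>i. sup (inf d (chi A i)) e)"
    using assms by (auto simp: chi_def fun_eq_iff sup_absorb2 sup_absorb1)
  have "f (\<lambda>i. sup (inf d (chi A i)) e) = sup (inf d (f (chi A))) e"
    using H
  proof
    assume "inf_homogeneous f \<and> comonotone_supremal f"
    then have "\<forall>x y. comonotone x y \<longrightarrow> f (\<lambda>i. sup (x i) (y i)) = sup (f x) (f y)"
      unfolding comonotone_supremal_def by blast
    note hh = this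
    have "f (\<lambda>i. sup (inf d (chi A i)) e) = sup (f (\<lambda>i. inf d (chi A i))) (f (\<lambda>_. e))"
      using como_chi2[of d A e] by (rule hh[rule_format, of "\<lambda>i. inf d (chi A i)" "\<lambda>_. e"])
    then show ?thesis using C1 C2 by simp
  next
    assume "sup_homogeneous f \<and> comonotone_infimal f"
    then have "\<forall>x c. f (\<lambda>i. sup c (x i)) = sup c (f x)" unfolding sup_homogeneous_def by blast
    from this[rule_format, of e "\<lambda>i. inf d (chi A i)"] have "f (\<lambda>i. sup e (inf d (chi A i))) = sup e (f (\<lambda>i. inf d (chi A i)))" .
    then show ?thesis using C2 by (simp add: sup_commute)
  qed
  then show ?thesis using w by simp
qed

definition "mm = (\<lambda>I. f (chi I))"

lemma cap: "capacity mm"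
proof -
  have "mono mm" unfolding mono_def mm_def
    by (auto intro!: fmono simp: le_fun_def chi_def)
  moreover have "mm {} = bot" "mm UNIV = top" using agg unfolding aggregation_def mm_def chi_def by simp_all
  ultimately show ?thesis unfolding capacity_def by simp
qed

lemma lower: "sugeno mm x \<le> f x"
proof (rule sugeno_le)
  fix I
  let ?c = "fin_Inf (x ` I)"
  have "f (\<lambda>i. inf ?c (chi I i)) = inf ?c (mm I)" using C2 by (simp add: mm_def)
  then have "inf (mm I) ?c = f (\<lambda>i. inf ?c (chi I i))" by (simp add: inf_commute)
  also have "\<dots> \<le> f x"
    by (rule fmono) (auto simp: le_fun_def chi_def intro: fin_Inf_le)
  finally show "inf (mm I) ?c \<le> f x" .
qed


lemma mm_mono: "A \<subseteq> B \<Longrightarrow> mm A \<le> mm B"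
  using cap unfolding capacity_def mono_def by blast

lemma upper_inf:
  assumes IHom: "inf_homogeneous f"
  shows "(\<forall>a\<in>A. y a = d) \<Longrightarrow> (\<forall>j. y j \<le> d) \<Longrightarrow> f y \<le> sugeno mm y"
proof (induct "card (UNIV - A)" arbitrary: A y d rule: less_induct)
  case (less A y d)
  define e where "e = fin_Sup (y ` (UNIV - A))"
  have ey: "\<And>j. j \<notin> A \<Longrightarrow> y j \<le> e" unfolding e_def by (rule le_fin_Sup) auto
  have ed: "e \<le> d" unfolding e_def using less.prems(2) by (subst fin_Sup_le_iff) auto
  have "f y \<le> f (\<lambda>i. if i \<in> A then d else e)"
    by (rule fmono) (auto simp: le_fun_def less.prems(1) ey)
  also have "\<dots> \<le> sup (inf d (mm A)) e" using C3[OF ed] by (simp add: mm_def)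
  finally have fy: "f y \<le> sup (inf d (mm A)) e" .
  have s1: "f y = inf (f y) (sup (inf d (mm A)) e)" using fy by (simp add: inf_absorb1)
  have s2: "inf (f y) (sup (inf d (mm A)) e) \<le> sup (inf d (mm A)) (inf (f y) e)"
    unfolding inf_sup_distrib1 by (rule sup_mono[OF inf_le2 order_refl])
  have s3: "inf (f y) e = fin_Sup ((\<lambda>j. inf (f y) (y j)) ` (UNIV - A))"
    unfolding e_def by (rule inf_fin_Sup) simp
  have s4: "fin_Sup ((\<lambda>j. inf (f y) (y j)) ` (UNIV - A)) \<le> sugeno mm y"
  proof (subst fin_Sup_le_iff, simp, intro ballI)
    fix z assume "z \<in> (\<lambda>j. inf (f y) (y j)) ` (UNIV - A)"
    then obtain j where j: "j \<notin> A" and z: "z = inf (f y) (y j)" by auto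
    have hom: "f (\<lambda>i. inf (y j) (y i)) = inf (y j) (f y)"
      using IHom[unfolded inf_homogeneous_def, rule_format, of "y j" y] .
    have card: "card (UNIV - insert j A) < card (UNIV - A)"
    proof -
      have "UNIV - insert j A = (UNIV - A) - {j}" by auto
      moreover have "card ((UNIV - A) - {j}) < card (UNIV - A)"
      proof (rule card_Diff1_less)
        show "finite (UNIV - A)" by simp
        show "j \<in> UNIV - A" using j by simp
      qed
      ultimately show ?thesis by (simp only:)
    qed
    have "f (\<lambda>i. inf (y j) (y i)) \<le> sugeno mm (\<lambda>i. inf (y j) (y i))"
    proof (rule less.hyps[OF card])
      show "\<forall>a\<in>insert j A. inf (y j) (y a) = y j"
      proof
        fix a assume a: "a \<in> insert j A"
        have "y j \<le> y a"
        proof (cases "a = j")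
          case False
          then have "y a = d" using a less.prems(1) by simp
          then show ?thesis using less.prems(2) by simp
        qed simp
        then show "inf (y j) (y a) = y j" by (rule inf_absorb1)
      qed
      show "\<forall>i. inf (y j) (y i) \<le> y j" by simp
    qed
    also have "\<dots> \<le> sugeno mm y" by (rule sugeno_mono) (simp add: le_fun_def)
    finally show "z \<le> sugeno mm y" using hom z by (simp add: inf_commute)
  qed
  have s5: "inf d (mm A) \<le> sugeno mm y"
  proof (cases "A = {}")
    case True
    then have "mm A = bot" using cap unfolding capacity_def by simp
    then show ?thesis by simp
  next
    case False
    then have "y ` A = {d}" using less.prems(1) by auto
    then have "fin_Inf (y ` A) = d" by simp
    then have "inf d (mm A) = inf (mm A) (fin_Inf (y ` A))" by (simp add: inf_commute)
    then show ?thesis using sugeno_term by metis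
  qed
  have "sup (inf d (mm A)) (inf (f y) e) \<le> sugeno mm y"
    using s3 s4 s5 by simp
  then show ?case using s1 s2 by (metis order_trans)
qed

lemma upper_sup:
  assumes SHom: "sup_homogeneous f"
  shows "finite K \<Longrightarrow> \<forall>x. (\<forall>i. i \<notin> K \<longrightarrow> x i = bot \<or> x i = top) \<longrightarrow> f x \<le> sugeno mm x"
proof (induct K rule: finite_induct)
  case empty
  show ?case
  proof (intro allI impI)
    fix x :: "'n \<Rightarrow> 'a"
    assume x: "\<forall>i. i \<notin> {} \<longrightarrow> x i = bot \<or> x i = top"
    define I where "I = {i. x i = top}"
    have "x = chi I"
    proof
      fix i show "x i = chi I i" using x[rule_format, of i] unfolding chi_def I_def by auto
    qed
    then have fx: "f x = mm I" by (simp add: mm_def)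
    have "top \<le> fin_Inf (x ` I)" by (subst le_fin_Inf_iff) (auto simp: I_def)
    then have "fin_Inf (x ` I) = top" by (rule top_unique[THEN iffD1])
    then have "mm I = inf (mm I) (fin_Inf (x ` I))" by simp
    then show "f x \<le> sugeno mm x" using fx sugeno_term by metis
  qed
next
  case (insert k K)
  show ?case
  proof (intro allI impI)
    fix x :: "'n \<Rightarrow> 'a"
    assume x: "\<forall>i. i \<notin> insert k K \<longrightarrow> x i = bot \<or> x i = top"
    define x0 where "x0 = x(k := bot)"
    define x1 where "x1 = x(k := top)"
    have h0: "f x0 \<le> sugeno mm x0" using insert.hyps(3) x unfolding x0_def by auto
    have h1: "f x1 \<le> sugeno mm x1" using insert.hyps(3) x unfolding x1_def by auto
    have "f x \<le> f (\<lambda>i. sup (x k) (x0 i))" by (rule fmono) (auto simp: le_fun_def x0_def)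
    also have "\<dots> = sup (x k) (f x0)"
      using SHom[unfolded sup_homogeneous_def, rule_format, of "x k" x0] .
    finally have a1: "f x \<le> sup (x k) (f x0)" .
    have a2: "f x \<le> f x1" by (rule fmono) (auto simp: le_fun_def x1_def)
    have "f x \<le> inf (sup (x k) (f x0)) (f x1)" using a1 a2 by simp
    also have "\<dots> = sup (inf (x k) (f x1)) (inf (f x0) (f x1))" by (simp add: inf_sup_distrib2)
    also have "\<dots> \<le> sup (inf (x k) (f x1)) (f x0)" by (rule sup_mono[OF order_refl inf_le1])
    finally have a3: "f x \<le> sup (inf (x k) (f x1)) (f x0)" .
    have b0: "f x0 \<le> sugeno mm x"
      using h0 sugeno_mono[of x0 x mm] by (force simp: le_fun_def x0_def)
    have "inf (x k) (f x1) \<le> inf (x k) (sugeno mm x1)" using h1 by (rule inf_mono[OF order_refl])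
    also have "\<dots> = fin_Sup ((\<lambda>I. inf (x k) (inf (mm I) (fin_Inf (x1 ` I)))) ` UNIV)"
      unfolding sugeno_def by (rule inf_fin_Sup) simp
    also have "\<dots> \<le> sugeno mm x"
    proof -
     have "\<forall>z\<in>range (\<lambda>I. inf (x k) (inf (mm I) (fin_Inf (x1 ` I)))). z \<le> sugeno mm x"
     proof
      fix z assume "z \<in> range (\<lambda>I. inf (x k) (inf (mm I) (fin_Inf (x1 ` I))))"
      then obtain I where zI: "z = inf (x k) (inf (mm I) (fin_Inf (x1 ` I)))" by auto
      have m: "mm I \<le> mm (insert k I)" by (rule mm_mono) auto
      have "inf (x k) (fin_Inf (x1 ` I)) \<le> fin_Inf (x ` insert k I)"
      proof (rule le_fin_Inf_iff[THEN iffD2], simp, intro ballI)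
        fix w assume "w \<in> x ` insert k I"
        then obtain i where i: "i \<in> insert k I" and w: "w = x i" by auto
        show "inf (x k) (fin_Inf (x1 ` I)) \<le> w"
        proof (cases "i = k")
          case True then show ?thesis using w by simp
        next
          case False
          have "fin_Inf (x1 ` I) \<le> x1 i" using i False by (intro fin_Inf_le) auto
          then show ?thesis using False w by (simp add: x1_def le_infI2)
        qed
      qed
      then have "inf (x k) (inf (mm I) (fin_Inf (x1 ` I))) \<le> inf (mm (insert k I)) (fin_Inf (x ` insert k I))"
        using m by (meson inf_le1 inf_le2 le_inf_iff order_trans)
      also have "\<dots> \<le> sugeno mm x" by (rule sugeno_term)
      finally show "z \<le> sugeno mm x" using zI by simp
     qed
     then show ?thesis by (subst fin_Sup_le_iff) simp_all
    qed
    finally have b1: "inf (x k) (f x1) \<le> sugeno mm x" .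
    show "f x \<le> sugeno mm x" using a3 b0 b1 by (meson le_sup_iff order_trans)
  qed
qed
end


theorem corollary3:
  fixes f :: "('n::finite \<Rightarrow> 'a::{distrib_lattice,bounded_lattice}) \<Rightarrow> 'a"
  assumes "aggregation f"
    and "(inf_homogeneous f \<and> comonotone_supremal f) \<or> (sup_homogeneous f \<and> comonotone_infimal f)"
  shows "\<exists>m :: 'n set \<Rightarrow> 'a. capacity m \<and> f = sugeno m"
proof (intro exI conjI)
  show "capacity (mm f)" by (rule cap[OF assms])
  show "f = sugeno (mm f)"
  proof
    fix x
    have up: "f x \<le> sugeno (mm f) x"
      using assms(2)
    proof
      assume "inf_homogeneous f \<and> comonotone_supremal f"
      then have ih: "inf_homogeneous f" by simp
      show ?thesis using upper_inf[OF assms ih, of "{}" x top] by simp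
    next
      assume "sup_homogeneous f \<and> comonotone_infimal f"
      then have sh: "sup_homogeneous f" by simp
      show ?thesis using upper_sup[OF assms sh, of UNIV] by simp
    qed
    show "f x = sugeno (mm f) x" using up lower[OF assms, of x] by (rule antisym)
  qed
qed

end
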